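(* For any $n$-agent all-pay rank-based mechanism with allocation rule $x$ and any $\delta<1/n$, the equilibrium bid function $b$ satisfies (1) $b(\delta)\le \delta\,e\,x'(\delta)$, and (2) $b(1)-b(1-\delta)\le \delta\,e\,x'(1-\delta)$.
   Context: Agents have values i.i.d. from a continuous distribution $F$ on $[0,1]$; quantile $q=F(v)$ and value function $v(q)=F^{-1}(q)\in[0,1]$. For $k\in\{1,\dots,n-1\}$ the $k$-highest-bids-win allocation rule is $x_k(q)=\sum_{i=0}^{k-1}\binom{n-1}{i}q^{n-1-i}(1-q)^i$; $x_0\equiv0$, $x_n\equiv1$. A rank-based mechanism with position weights $1\ge w_1\ge\cdots\ge w_n\ge 0$ ($w_{n+1}:=0$) has allocation rule $x(q)=\sum_{k=1}^{n}(w_k-w_{k+1})x_k(q)$. In the all-pay format each agent pays his bid; the Bayes–Nash equilibrium bid as a function of quantile is defined by $b(0)=0$ and $b'(q)=v(q)\,x'(q)$. *)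

theory Defs
  imports "HOL-Analysis.Analysis"
begin

text \<open>k-highest-bids-win allocation rule x_k(q) for n agents; x_0 = 0, x_n = 1.\<close>
definition khw_alloc :: "nat \<Rightarrow> nat \<Rightarrow> real \<Rightarrow> real" where
  "khw_alloc n k q =
     (if k = 0 then 0
      else if n \<le> k then 1
      else (\<Sum>i<k. real (n - 1 choose i) * q ^ (n - 1 - i) * (1 - q) ^ i))"

definition ext_weight :: "nat \<Rightarrow> (nat \<Rightarrow> real) \<Rightarrow> nat \<Rightarrow> real" where
  "ext_weight n w k = (if k = n + 1 then 0 else w k)"

definition rank_alloc :: "nat \<Rightarrow> (nat \<Rightarrow> real) \<Rightarrow> real \<Rightarrow> real" where
  "rank_alloc n w q =
     (\<Sum>k=1..n. (ext_weight n w k - ext_weight n w (k + 1)) * khw_alloc n k q)"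

definition valid_weights :: "nat \<Rightarrow> (nat \<Rightarrow> real) \<Rightarrow> bool" where
  "valid_weights n w \<longleftrightarrow>
     (n \<ge> 1 \<longrightarrow> w 1 \<le> 1 \<and> 0 \<le> w n) \<and> (\<forall>k. 1 \<le> k \<and> k < n \<longrightarrow> w (k + 1) \<le> w k)"

definition cont_dist_01 :: "(real \<Rightarrow> real) \<Rightarrow> bool" where
  "cont_dist_01 F \<longleftrightarrow> mono F \<and> continuous_on UNIV F \<and> F 0 = 0 \<and> F 1 = 1
      \<and> (\<forall>t. 0 \<le> F t \<and> F t \<le> 1)"

text \<open>Value function v(q) = F^{-1}(q) (generalized inverse on [0,1]).\<close>
definition value_fn :: "(real \<Rightarrow> real) \<Rightarrow> real \<Rightarrow> real" where
  "value_fn F q = Inf {t \<in> {0..1}. q \<le> F t}"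

text \<open>All-pay equilibrium bid: b(0) = 0, b'(q) = v(q) x'(q), i.e.
  b(q) = integral over [0,q] of v(t) x'(t).\<close>
definition allpay_bid :: "nat \<Rightarrow> (nat \<Rightarrow> real) \<Rightarrow> (real \<Rightarrow> real) \<Rightarrow> real \<Rightarrow> real" where
  "allpay_bid n w F q = integral {0..q} (\<lambda>t. value_fn F t * deriv (rank_alloc n w) t)"

end

theory Submission
  imports Defs
begin

lemma aux: fixes a b c d X :: real assumes "b * a = c + d * c" shows "a * (b * X) = c * X + d * (c * X)"
proof -
  have "a * (b * X) = (b * a) * X" by simp
  also have "\<dots> = (c + d * c) * X" using assms by simp
  finally show ?thesis by (simp add: algebra_simps)
qed

lemma sumk_deriv:
  fixes q :: real
  assumes "k \<le> N"
  shows "((\<lambda>q. \<Sum>i<k. real (N choose i) * q ^ (N - i) * (1 - q) ^ i) has_real_derivative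
          (real k * real (N choose k) * q ^ (N - k) * (1 - q) ^ (k - 1))) (at q)"
  using assms
proof (induction k)
  case 0
  then show ?case by simp
next
  case (Suc k)
  have IH: "((\<lambda>q. \<Sum>i<k. real (N choose i) * q ^ (N - i) * (1 - q) ^ i) has_real_derivative
          (real k * real (N choose k) * q ^ (N - k) * (1 - q) ^ (k - 1))) (at q)"
    using Suc by simp
  have T: "((\<lambda>q. real (N choose k) * q ^ (N - k) * (1 - q) ^ k) has_real_derivative
      (real (N choose k) * (real (N - k) * q ^ (N - k - 1) * (1 - q) ^ k
        - q ^ (N - k) * (real k * (1 - q) ^ (k - 1))))) (at q)"
    by (auto intro!: derivative_eq_intros simp: algebra_simps)
  have bin: "real (Suc k) * real (N choose Suc k) = real (N - k) * real (N choose k)"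
  proof -
    have "Suc k * (N choose Suc k) = (N - k) * (N choose k)"
      using binomial_absorption[of k N] binomial_absorb_comp[of N k] by simp
    then show ?thesis by (metis of_nat_mult)
  qed
  have qp: "q ^ (N - k) = q * q ^ (N - Suc k)"
    using Suc.prems by (metis Suc_diff_Suc Suc_le_lessD power_Suc)
  have "real k * real (N choose k) * q ^ (N - k) * (1 - q) ^ (k - 1) +
      real (N choose k) * (real (N - k) * q ^ (N - k - 1) * (1 - q) ^ k
        - q ^ (N - k) * (real k * (1 - q) ^ (k - 1)))
     = real (Suc k) * real (N choose Suc k) * q ^ (N - Suc k) * (1 - q) ^ (Suc k - 1)"
  proof -
    have bin': "real (N - k) * real (N choose k) = real (N choose Suc k) + real k * real (N choose Suc k)"
      using bin by (simp add: algebra_simps)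
    show ?thesis apply (simp add: algebra_simps)
      by (rule aux[OF bin'])
  qed
  then show ?case
    using DERIV_add[OF IH T] by simp
qed

definition Dk :: "nat \<Rightarrow> nat \<Rightarrow> real \<Rightarrow> real" where
  "Dk n k q = (if k < n then real k * real (n - 1 choose k) * q ^ (n - 1 - k) * (1 - q) ^ (k - 1) else 0)"

lemma khw_deriv:
  assumes "1 \<le> k"
  shows "(khw_alloc n k has_real_derivative Dk n k q) (at q)"
proof (cases "k < n")
  case True
  have "khw_alloc n k = (\<lambda>q. \<Sum>i<k. real (n - 1 choose i) * q ^ (n - 1 - i) * (1 - q) ^ i)"
    using True assms by (auto simp: khw_alloc_def fun_eq_iff)
  moreover have "k \<le> n - 1" using True by simp
  ultimately show ?thesis using sumk_deriv[of k "n-1" q] True by (simp add: Dk_def)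
next
  case False
  then have "khw_alloc n k = (\<lambda>q. 1)" using assms by (auto simp: khw_alloc_def fun_eq_iff)
  then show ?thesis using False by (simp add: Dk_def)
qed

definition Xd :: "nat \<Rightarrow> (nat \<Rightarrow> real) \<Rightarrow> real \<Rightarrow> real" where
  "Xd n w q = (\<Sum>k=1..n. (ext_weight n w k - ext_weight n w (k + 1)) * Dk n k q)"

lemma rank_deriv: "(rank_alloc n w has_real_derivative Xd n w q) (at q)"
proof -
  have "rank_alloc n w = (\<lambda>q. \<Sum>k=1..n. (ext_weight n w k - ext_weight n w (k + 1)) * khw_alloc n k q)"
    by (simp add: rank_alloc_def fun_eq_iff)
  then show ?thesis unfolding Xd_def
    by (auto intro!: derivative_eq_intros khw_deriv simp: mult.commute)
qed

lemma deriv_rank: "deriv (rank_alloc n w) q = Xd n w q"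
  using rank_deriv DERIV_imp_deriv by blast

lemma coef_nonneg:
  assumes "valid_weights n w" "k \<in> {1..n}"
  shows "0 \<le> ext_weight n w k - ext_weight n w (k + 1)"
  using assms by (auto simp: valid_weights_def ext_weight_def)

lemma Dk_nonneg: "0 \<le> q \<Longrightarrow> q \<le> 1 \<Longrightarrow> 0 \<le> Dk n k q"
  by (simp add: Dk_def)

lemma Xd_nonneg: "valid_weights n w \<Longrightarrow> 0 \<le> q \<Longrightarrow> q \<le> 1 \<Longrightarrow> 0 \<le> Xd n w q"
  unfolding Xd_def by (intro sum_nonneg mult_nonneg_nonneg coef_nonneg Dk_nonneg) auto

lemma E_bound:
  assumes "n \<ge> 1" "0 \<le> \<delta>" "\<delta> < 1 / real n" "j \<le> n - 2"
  shows "1 \<le> exp 1 * (1 - \<delta>) ^ j"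
proof -
  have nd: "real n * \<delta> < 1" using assms by (simp add: field_simps)
  have d1: "\<delta> < 1" using assms(1) nd assms(2)
    by (smt (verit) mult_le_cancel_right1 of_nat_1 of_nat_mono)
  define y where "y = \<delta> / (1 - \<delta>)"
  have y0: "0 \<le> y" using d1 assms by (simp add: y_def)
  have inv: "1 / (1 - \<delta>) = 1 + y" using d1 by (simp add: y_def field_simps)
  have "(1 / (1 - \<delta>)) ^ j \<le> (1 / (1 - \<delta>)) ^ (n - 2)"
    by (rule power_increasing) (use assms d1 in \<open>auto simp: field_simps\<close>)
  also have "\<dots> \<le> exp y ^ (n - 2)"
    unfolding inv by (rule power_mono) (use y0 in auto)
  also have "\<dots> = exp (real (n - 2) * y)" by (simp add: exp_of_nat_mult)
  also have "\<dots> \<le> exp 1"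
  proof -
    have "real (n - 2) \<le> real n - 1" using assms(1) by linarith
    then have "real (n - 2) * \<delta> \<le> (real n - 1) * \<delta>" using assms(2) by (rule mult_right_mono)
    also have "\<dots> \<le> 1 - \<delta>" using nd by (simp add: algebra_simps)
    finally have "real (n - 2) * y \<le> 1" using d1 by (simp add: y_def field_simps)
    then show ?thesis by simp
  qed
  finally have "(1 / (1 - \<delta>)) ^ j \<le> exp 1" .
  then show ?thesis using d1 by (simp add: power_divide field_simps)
qed


lemma Dk_bottom:
  assumes "n \<ge> 1" "0 \<le> t" "t \<le> \<delta>" "\<delta> < 1 / real n"
  shows "Dk n k t \<le> exp 1 * Dk n k \<delta>"
proof (cases "k < n")
  case True
  have d1: "\<delta> < 1" using assms
    by (smt (verit) divide_le_eq_1 of_nat_1 of_nat_mono)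
  have a: "t ^ (n - 1 - k) \<le> \<delta> ^ (n - 1 - k)" using assms by (intro power_mono) auto
  have b1: "(1 - t) ^ (k - 1) \<le> 1" using assms d1 by (intro power_le_one) auto
  have b2: "1 \<le> exp 1 * (1 - \<delta>) ^ (k - 1)"
    using E_bound[OF assms(1) _ assms(4), of "k - 1"] True assms by linarith
  have "t ^ (n - 1 - k) * (1 - t) ^ (k - 1) \<le> \<delta> ^ (n - 1 - k) * (exp 1 * (1 - \<delta>) ^ (k - 1))"
    using a b1 b2 assms d1 by (intro mult_mono) auto
  then have "real k * real (n - 1 choose k) * (t ^ (n - 1 - k) * (1 - t) ^ (k - 1))
     \<le> real k * real (n - 1 choose k) * (\<delta> ^ (n - 1 - k) * (exp 1 * (1 - \<delta>) ^ (k - 1)))"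
    by (intro mult_left_mono) auto
  then show ?thesis using True by (simp add: Dk_def algebra_simps)
next
  case False
  then show ?thesis by (simp add: Dk_def)
qed

lemma Dk_top:
  assumes "n \<ge> 1" "1 - \<delta> \<le> t" "t \<le> 1" "0 \<le> \<delta>" "\<delta> < 1 / real n"
  shows "Dk n k t \<le> exp 1 * Dk n k (1 - \<delta>)"
proof (cases "k < n \<and> k \<ge> 1")
  case True
  have d1: "\<delta> < 1" using assms
    by (smt (verit) divide_le_eq_1 of_nat_1 of_nat_mono)
  have a1: "t ^ (n - 1 - k) \<le> 1" using assms d1 by (intro power_le_one) auto
  have a2: "1 \<le> exp 1 * (1 - \<delta>) ^ (n - 1 - k)"
    using E_bound[OF assms(1) assms(4) assms(5), of "n - 1 - k"] True by linarith
  have b: "(1 - t) ^ (k - 1) \<le> \<delta> ^ (k - 1)" using assms by (intro power_mono) auto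
  have "t ^ (n - 1 - k) * (1 - t) ^ (k - 1) \<le> (exp 1 * (1 - \<delta>) ^ (n - 1 - k)) * \<delta> ^ (k - 1)"
    using a1 a2 b assms d1 by (intro mult_mono) auto
  then have "real k * real (n - 1 choose k) * (t ^ (n - 1 - k) * (1 - t) ^ (k - 1))
     \<le> real k * real (n - 1 choose k) * ((exp 1 * (1 - \<delta>) ^ (n - 1 - k)) * \<delta> ^ (k - 1))"
    by (intro mult_left_mono) auto
  then show ?thesis using True by (simp add: Dk_def algebra_simps)
next
  case False
  then show ?thesis
  proof (cases "k < n")
    case True
    with False have "k = 0" by simp
    then show ?thesis by (simp add: Dk_def)
  qed (simp add: Dk_def)
qed

lemma Xd_bottom:
  assumes "valid_weights n w" "n \<ge> 1" "0 \<le> t" "t \<le> \<delta>" "\<delta> < 1 / real n"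
  shows "Xd n w t \<le> exp 1 * Xd n w \<delta>"
  unfolding Xd_def sum_distrib_left
proof (rule sum_mono)
  fix k assume k: "k \<in> {1..n}"
  have "(ext_weight n w k - ext_weight n w (k + 1)) * Dk n k t \<le>
        (ext_weight n w k - ext_weight n w (k + 1)) * (exp 1 * Dk n k \<delta>)"
    by (rule mult_left_mono[OF Dk_bottom[OF assms(2-5)] coef_nonneg[OF assms(1) k]])
  then show "(ext_weight n w k - ext_weight n w (k + 1)) * Dk n k t \<le>
        exp 1 * ((ext_weight n w k - ext_weight n w (k + 1)) * Dk n k \<delta>)" by (simp add: algebra_simps)
qed

lemma Xd_top:
  assumes "valid_weights n w" "n \<ge> 1" "1 - \<delta> \<le> t" "t \<le> 1" "0 \<le> \<delta>" "\<delta> < 1 / real n"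
  shows "Xd n w t \<le> exp 1 * Xd n w (1 - \<delta>)"
  unfolding Xd_def sum_distrib_left
proof (rule sum_mono)
  fix k assume k: "k \<in> {1..n}"
  have "(ext_weight n w k - ext_weight n w (k + 1)) * Dk n k t \<le>
        (ext_weight n w k - ext_weight n w (k + 1)) * (exp 1 * Dk n k (1 - \<delta>))"
    by (rule mult_left_mono[OF Dk_top[OF assms(2-6)] coef_nonneg[OF assms(1) k]])
  then show "(ext_weight n w k - ext_weight n w (k + 1)) * Dk n k t \<le>
        exp 1 * ((ext_weight n w k - ext_weight n w (k + 1)) * Dk n k (1 - \<delta>))" by (simp add: algebra_simps)
qed

lemma value_fn_bounds:
  assumes "cont_dist_01 F" "0 \<le> t" "t \<le> 1"
  shows "0 \<le> value_fn F t" "value_fn F t \<le> 1"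
proof -
  let ?S = "{s \<in> {0..1}. t \<le> F s}"
  have "1 \<in> ?S" using assms by (auto simp: cont_dist_01_def)
  then have ne: "?S \<noteq> {}" by blast
  have bb: "bdd_below ?S" by (rule bdd_belowI[of _ 0]) auto
  show "0 \<le> value_fn F t" unfolding value_fn_def by (rule cInf_greatest[OF ne]) auto
  show "value_fn F t \<le> 1" unfolding value_fn_def by (rule cInf_lower[OF \<open>1 \<in> ?S\<close> bb])
qed

lemma value_fn_mono:
  assumes "cont_dist_01 F"
  shows "mono_on {0..1} (value_fn F)"
proof (rule mono_onI)
  fix r s :: real assume r: "r \<in> {0..1}" and s: "s \<in> {0..1}" and rs: "r \<le> s"
  let ?R = "{x \<in> {0..1}. r \<le> F x}" and ?S = "{x \<in> {0..1}. s \<le> F x}"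
  have "1 \<in> ?S" using assms s by (auto simp: cont_dist_01_def)
  then have ne: "?S \<noteq> {}" by blast
  have bb: "bdd_below ?R" by (rule bdd_belowI[of _ 0]) auto
  have "?S \<subseteq> ?R" using rs by auto
  then show "value_fn F r \<le> value_fn F s"
    unfolding value_fn_def by (rule cInf_superset_mono[OF ne bb])
qed

lemma Dk_cont: "continuous_on S (Dk n k)"
  by (cases "k < n") (auto simp: Dk_def[abs_def] intro!: continuous_intros)

lemma Xd_cont: "continuous_on S (Xd n w)"
  unfolding Xd_def[abs_def] by (auto intro!: continuous_intros Dk_cont continuous_on_mult_left)

lemma integrand_int:
  assumes "cont_dist_01 F" "0 \<le> a" "b \<le> 1"
  shows "(\<lambda>t. value_fn F t * Xd n w t) integrable_on {a..b}"
proof -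
  have mo: "mono_on {a..b} (value_fn F)"
    using value_fn_mono[OF assms(1)] assms by (auto simp: mono_on_def)
  have "space lborel = space lebesgue" "sets borel \<subseteq> sets lebesgue"
    by force+
  then have fborel: "value_fn F \<in> borel_measurable (lebesgue_on {a..b})"
    by (metis mo borel_measurable_mono_on_fnc borel_measurable_subalgebra mono_restrict_space space_lborel space_restrict_space)
  have bnd: "bounded (value_fn F ` {a..b})"
  proof (rule boundedI[of _ 1])
    fix y assume "y \<in> value_fn F ` {a..b}"
    then obtain t where "t \<in> {a..b}" "y = value_fn F t" by auto
    then show "norm y \<le> 1" using value_fn_bounds[OF assms(1), of t] assms by auto
  qed
  have g: "Xd n w absolutely_integrable_on {a..b}"
    by (rule absolutely_integrable_continuous_real[OF Xd_cont])
  have "(\<lambda>t. value_fn F t * Xd n w t) absolutely_integrable_on {a..b}"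
    by (rule absolutely_integrable_bounded_measurable_product_real[OF fborel _ bnd g]) auto
  then show ?thesis using set_lebesgue_integral_eq_integral(1) by blast
qed

theorem mainTheorem8:
  fixes n :: nat and w :: "nat \<Rightarrow> real" and F :: "real \<Rightarrow> real" and \<delta> :: real
  assumes "n \<ge> 1"
    and "valid_weights n w"
    and "cont_dist_01 F"
    and "0 \<le> \<delta>" and "\<delta> < 1 / real n"
  shows "allpay_bid n w F \<delta> \<le> \<delta> * exp 1 * deriv (rank_alloc n w) \<delta>
       \<and> allpay_bid n w F 1 - allpay_bid n w F (1 - \<delta>)
           \<le> \<delta> * exp 1 * deriv (rank_alloc n w) (1 - \<delta>)"
proof -
  have d1: "\<delta> < 1" using assms
    by (smt (verit) divide_le_eq_1 of_nat_1 of_nat_mono)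
  let ?g = "\<lambda>t. value_fn F t * Xd n w t"
  have bid: "allpay_bid n w F q = integral {0..q} ?g" for q
    by (simp add: allpay_bid_def deriv_rank)
  have pt: "?g t \<le> Xd n w t" if "0 \<le> t" "t \<le> 1" for t
    using value_fn_bounds[OF assms(3) that] Xd_nonneg[OF assms(2) that]
    by (simp add: mult_left_le_one_le)
  have A: "integral {0..\<delta>} ?g \<le> integral {0..\<delta>} (\<lambda>t. exp 1 * Xd n w \<delta>)"
  proof (rule integral_le)
    show "?g integrable_on {0..\<delta>}" using integrand_int[OF assms(3)] d1 by simp
    show "?g x \<le> exp 1 * Xd n w \<delta>" if "x \<in> {0..\<delta>}" for x
      using pt[of x] Xd_bottom[OF assms(2,1), of x \<delta>] that d1 assms by auto
  qed auto
  have B: "integral {1-\<delta>..1} ?g \<le> integral {1-\<delta>..1} (\<lambda>t. exp 1 * Xd n w (1 - \<delta>))"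
  proof (rule integral_le)
    show "?g integrable_on {1-\<delta>..1}" using integrand_int[OF assms(3)] d1 by simp
    show "?g x \<le> exp 1 * Xd n w (1 - \<delta>)" if "x \<in> {1-\<delta>..1}" for x
      using pt[of x] Xd_top[OF assms(2,1), of \<delta> x] that d1 assms by auto
  qed auto
  have I01: "?g integrable_on {0..1}" using integrand_int[OF assms(3), of 0 1] by simp
  have C: "integral {0..1-\<delta>} ?g + integral {1-\<delta>..1} ?g = integral {0..1} ?g"
    by (rule Henstock_Kurzweil_Integration.integral_combine[OF _ _ I01]) (use d1 assms in auto)
  show ?thesis
    using A B C assms d1 by (simp add: bid deriv_rank algebra_simps)
qed

end
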